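(* Let $X$ be a Tychonoff space with $|X|>1$ and $I\in\mathbb{A}(X)$. Then $I$ is a leaf vertex of $\mathbb{AG}(X)$ if and only if $X\setminus\overline{\mathcal{O}(I)}$ is a singleton.
   Context: $C(X)$ denotes the ring of all real-valued continuous functions on $X$; $\mathrm{Coz}(f)=\{x: f(x)\neq 0\}$; for $S\subseteq C(X)$, $\mathcal{O}(S)=\bigcup_{f\in S}\mathrm{Coz}(f)$. $\mathbb{A}(X)$ is the set of nonzero ideals $I$ of $C(X)$ for which there is a nonzero ideal $J$ with $IJ=\{0\}$; $\mathbb{AG}(X)$ has vertex set $\mathbb{A}(X)$, distinct $I,J$ adjacent iff $IJ=\{0\}$. A leaf vertex is a vertex adjacent to exactly one vertex. Overline denotes closure. *)

theory Defs
  imports "HOL-Analysis.Analysis"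
begin

text \<open>C(X): continuous real functions on X, represented extensionally (value 0 off the space).\<close>
definition CX :: "'a topology \<Rightarrow> ('a \<Rightarrow> real) set" where
  "CX X = {f. continuous_map X euclideanreal f \<and> (\<forall>x. x \<notin> topspace X \<longrightarrow> f x = 0)}"

definition tychonoff_space :: "'a topology \<Rightarrow> bool" where
  "tychonoff_space X \<longleftrightarrow> completely_regular_space X \<and> t1_space X"

definition is_ideal :: "'a topology \<Rightarrow> ('a \<Rightarrow> real) set \<Rightarrow> bool" where
  "is_ideal X I \<longleftrightarrow> I \<subseteq> CX X \<and> (\<lambda>x. 0) \<in> I \<and>
     (\<forall>f\<in>I. \<forall>g\<in>I. (\<lambda>x. f x + g x) \<in> I \<and> (\<lambda>x. - f x) \<in> I) \<and>
     (\<forall>h\<in>CX X. \<forall>f\<in>I. (\<lambda>x. h x * f x) \<in> I)"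

definition ideal_prod :: "'a topology \<Rightarrow> ('a \<Rightarrow> real) set \<Rightarrow> ('a \<Rightarrow> real) set \<Rightarrow> ('a \<Rightarrow> real) set" where
  "ideal_prod X I J = \<Inter>{K. is_ideal X K \<and> (\<forall>f\<in>I. \<forall>g\<in>J. (\<lambda>x. f x * g x) \<in> K)}"

definition zero_ideal :: "('a \<Rightarrow> real) set" where
  "zero_ideal = {(\<lambda>x. 0)}"

definition annih_ideals :: "'a topology \<Rightarrow> ('a \<Rightarrow> real) set set" where
  "annih_ideals X = {I. is_ideal X I \<and> I \<noteq> zero_ideal \<and>
      (\<exists>J. is_ideal X J \<and> J \<noteq> zero_ideal \<and> ideal_prod X I J = zero_ideal)}"

definition AG_adj :: "'a topology \<Rightarrow> ('a \<Rightarrow> real) set \<Rightarrow> ('a \<Rightarrow> real) set \<Rightarrow> bool" where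
  "AG_adj X I J \<longleftrightarrow> I \<in> annih_ideals X \<and> J \<in> annih_ideals X \<and> I \<noteq> J \<and>
      ideal_prod X I J = zero_ideal"

definition leaf_vertex :: "'a topology \<Rightarrow> ('a \<Rightarrow> real) set \<Rightarrow> bool" where
  "leaf_vertex X I \<longleftrightarrow> I \<in> annih_ideals X \<and> (\<exists>!J. AG_adj X I J)"

definition coz :: "'a topology \<Rightarrow> ('a \<Rightarrow> real) \<Rightarrow> 'a set" where
  "coz X f = {x \<in> topspace X. f x \<noteq> 0}"

definition coz_union :: "'a topology \<Rightarrow> ('a \<Rightarrow> real) set \<Rightarrow> 'a set" where
  "coz_union X S = (\<Union>f\<in>S. coz X f)"

end

theory Submission
  imports Defs
begin

definition JS :: "'a topology \<Rightarrow> 'a set \<Rightarrow> ('a \<Rightarrow> real) set" where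
  "JS X S = {g \<in> CX X. coz X g \<subseteq> S}"

lemma CX_zero_out: "f \<in> CX X \<Longrightarrow> x \<notin> topspace X \<Longrightarrow> f x = 0"
  by (simp add: CX_def)

lemma CX_cont: "f \<in> CX X \<Longrightarrow> continuous_map X euclideanreal f"
  by (simp add: CX_def)

lemma zero_ideal_is: "is_ideal X zero_ideal"
  by (auto simp: is_ideal_def zero_ideal_def CX_def)

lemma prod_zero_iff:
  assumes "is_ideal X I" "is_ideal X J"
  shows "ideal_prod X I J = zero_ideal \<longleftrightarrow> (\<forall>f\<in>I. \<forall>g\<in>J. \<forall>x. f x * g x = 0)"
proof
  assume h: "ideal_prod X I J = zero_ideal"
  show "\<forall>f\<in>I. \<forall>g\<in>J. \<forall>x. f x * g x = 0"
  proof (intro ballI allI)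
    fix f g x assume "f \<in> I" "g \<in> J"
    then have "(\<lambda>x. f x * g x) \<in> ideal_prod X I J"
      by (auto simp: ideal_prod_def)
    then have "(\<lambda>x. f x * g x) = (\<lambda>x. 0)" using h by (simp add: zero_ideal_def)
    then show "f x * g x = 0" by (rule fun_cong[where x=x, THEN trans]) simp
  qed
next
  assume h: "\<forall>f\<in>I. \<forall>g\<in>J. \<forall>x. f x * g x = 0"
  have "zero_ideal \<in> {K. is_ideal X K \<and> (\<forall>f\<in>I. \<forall>g\<in>J. (\<lambda>x. f x * g x) \<in> K)}"
    using h zero_ideal_is[of X] by (auto simp: zero_ideal_def)
  then have s: "ideal_prod X I J \<subseteq> zero_ideal" unfolding ideal_prod_def by blast
  have "(\<lambda>x. 0) \<in> ideal_prod X I J" unfolding ideal_prod_def is_ideal_def by blast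
  with s show "ideal_prod X I J = zero_ideal" by (auto simp: zero_ideal_def)
qed

lemma nonzero_iff:
  assumes "is_ideal X I"
  shows "I \<noteq> zero_ideal \<longleftrightarrow> coz_union X I \<noteq> {}"
proof
  assume "I \<noteq> zero_ideal"
  moreover have "(\<lambda>x. 0) \<in> I" using assms by (simp add: is_ideal_def)
  ultimately obtain f where f: "f \<in> I" "f \<noteq> (\<lambda>x. 0)" by (auto simp: zero_ideal_def)
  then obtain x where "f x \<noteq> 0" by auto
  moreover have "f \<in> CX X" using f assms by (auto simp: is_ideal_def)
  ultimately have "x \<in> coz X f" using CX_zero_out[of f X x] by (auto simp: coz_def)
  then show "coz_union X I \<noteq> {}" using f by (auto simp: coz_union_def)
next
  assume "coz_union X I \<noteq> {}"
  then show "I \<noteq> zero_ideal" by (auto simp: coz_union_def zero_ideal_def coz_def)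
qed

lemma coz_open: "f \<in> CX X \<Longrightarrow> openin X (coz X f)"
proof -
  assume "f \<in> CX X"
  then have "openin X {x \<in> topspace X. f x \<in> - {0}}"
    by (intro openin_continuous_map_preimage[OF CX_cont]) auto
  then show ?thesis by (simp add: coz_def)
qed

lemma coz_union_open: "is_ideal X I \<Longrightarrow> openin X (coz_union X I)"
  unfolding coz_union_def by (intro openin_Union) (auto simp: is_ideal_def intro: coz_open)

lemma coz_union_sub: "coz_union X I \<subseteq> topspace X"
  by (auto simp: coz_union_def coz_def)

lemma JS_ideal: "is_ideal X (JS X S)"
proof -
  have a: "x \<in> S" if "{x \<in> topspace X. f x \<noteq> 0} \<subseteq> S" "{x \<in> topspace X. g x \<noteq> 0} \<subseteq> S"
     "x \<in> topspace X" "f x + g x \<noteq> 0" for f g :: "'a \<Rightarrow> real" and x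
  proof (cases "f x = 0")
    case True then show ?thesis using that by auto
  next
    case False then show ?thesis using that by auto
  qed
  show ?thesis
  unfolding is_ideal_def JS_def CX_def coz_def
  by (auto intro: continuous_map_real_mult continuous_intros a)
qed

lemma urysohn_fun:
  assumes "completely_regular_space X" "openin X S" "p \<in> S"
  shows "\<exists>g\<in>CX X. g p = 1 \<and> coz X g \<subseteq> S"
proof -
  have S: "S \<subseteq> topspace X" using assms(2) by (simp add: openin_subset)
  have "closedin X (topspace X - S)" using assms(2) by auto
  moreover have "p \<in> topspace X - (topspace X - S)" using assms S by auto
  moreover note assms(1)[unfolded completely_regular_space_def, rule_format, of "topspace X - S" p]
  ultimately obtain f :: "'a \<Rightarrow> real" where f: "continuous_map X (top_of_set {0..1}) f" "f p = 0"
      "f ` (topspace X - S) \<subseteq> {1}"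
    by blast
  have fc: "continuous_map X euclideanreal f"
    using f(1) by (simp add: continuous_map_in_subtopology)
  define g where "g x = (if x \<in> topspace X then 1 - f x else 0)" for x
  have "continuous_map X euclideanreal (\<lambda>x. 1 - f x)"
    by (rule continuous_map_diff[OF continuous_map_canonical_const fc])
  then have "continuous_map X euclideanreal g"
    by (rule continuous_map_eq) (simp add: g_def)
  then have "g \<in> CX X" by (simp add: CX_def g_def)
  moreover have "g p = 1" using f(2) S assms(3) by (auto simp: g_def)
  moreover have "coz X g \<subseteq> S" using f(3) by (auto simp: coz_def g_def)
  ultimately show ?thesis by blast
qed

lemma closure_disj:
  assumes "is_ideal X I" "is_ideal X J" "ideal_prod X I J = zero_ideal"
  shows "coz_union X J \<inter> X closure_of (coz_union X I) = {}"
proof -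
  have "coz_union X J \<inter> coz_union X I = {}"
    using assms prod_zero_iff[OF assms(1,2)] by (fastforce simp: coz_union_def coz_def)
  then show ?thesis using openin_Int_closure_of_eq_empty[OF coz_union_open[OF assms(2)]] by blast
qed

lemma adj_JS:
  assumes "completely_regular_space X" "I \<in> annih_ideals X" "openin X S"
    "S \<subseteq> topspace X - X closure_of (coz_union X I)" "p \<in> S"
  shows "AG_adj X I (JS X S)"
proof -
  have I: "is_ideal X I" "I \<noteq> zero_ideal" using assms(2) by (auto simp: annih_ideals_def)
  obtain g where g: "g \<in> CX X" "g p = 1" "coz X g \<subseteq> S" using urysohn_fun[OF assms(1,3,5)] by blast
  have gJ: "g \<in> JS X S" using g by (simp add: JS_def)
  have "g \<noteq> (\<lambda>x. 0)" using g(2) by auto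
  then have nz: "JS X S \<noteq> zero_ideal" using gJ by (auto simp: zero_ideal_def)
  have pt: "p \<in> topspace X" "p \<notin> X closure_of (coz_union X I)" using assms(4,5) by auto
  have "g \<notin> I"
  proof
    assume "g \<in> I"
    moreover have "p \<in> coz X g" using g(2) pt by (simp add: coz_def)
    ultimately have "p \<in> coz_union X I" unfolding coz_union_def by blast
    then show False using pt closure_of_subset[OF coz_union_sub[of X I]] by blast
  qed
  then have ne: "I \<noteq> JS X S" using gJ by blast
  have pr: "\<forall>f\<in>I. \<forall>h\<in>JS X S. \<forall>x. f x * h x = 0"
  proof (intro ballI allI)
    fix f h x assume f: "f \<in> I" and h: "h \<in> JS X S"
    show "f x * h x = 0"
    proof (rule ccontr)
      assume "f x * h x \<noteq> 0"
      then have "f x \<noteq> 0" "h x \<noteq> 0" by auto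
      moreover have "h \<in> CX X" "coz X h \<subseteq> S" using h by (auto simp: JS_def)
      ultimately have x: "x \<in> topspace X" "x \<in> S" using CX_zero_out[of h X x] by (auto simp: coz_def)
      then have "x \<in> coz_union X I" using f \<open>f x \<noteq> 0\<close> by (auto simp: coz_union_def coz_def)
      then show False using x assms(4) closure_of_subset[OF coz_union_sub[of X I]] by blast
    qed
  qed
  have p1: "ideal_prod X I (JS X S) = zero_ideal"
    using pr prod_zero_iff[OF I(1) JS_ideal] by blast
  have p2: "ideal_prod X (JS X S) I = zero_ideal"
    using pr prod_zero_iff[OF JS_ideal I(1)] by (auto simp: mult.commute)
  have "JS X S \<in> annih_ideals X"
    unfolding annih_ideals_def using JS_ideal nz I p2 by blast
  then show ?thesis using assms(2) ne p1 by (simp add: AG_adj_def)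
qed

theorem mainTheorem13:
  fixes X :: "'a topology" and I :: "('a \<Rightarrow> real) set"
  assumes "tychonoff_space X"
    and "\<exists>x\<in>topspace X. \<exists>y\<in>topspace X. x \<noteq> y"
    and "I \<in> annih_ideals X"
  shows "leaf_vertex X I \<longleftrightarrow> (\<exists>p. topspace X - X closure_of (coz_union X I) = {p})"
proof -
  have cr: "completely_regular_space X" and t1: "t1_space X"
    using assms(1) by (auto simp: tychonoff_space_def)
  define W where "W = topspace X - X closure_of (coz_union X I)"
  have Wo: "openin X W" unfolding W_def by (simp add: openin_diff)
  have I: "is_ideal X I" using assms(3) by (auto simp: annih_ideals_def)
  show ?thesis
  proof
    assume leaf: "leaf_vertex X I"
    obtain J where J: "is_ideal X J" "J \<noteq> zero_ideal" "ideal_prod X I J = zero_ideal"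
      using assms(3) by (auto simp: annih_ideals_def)
    obtain p where p: "p \<in> coz_union X J" using nonzero_iff[OF J(1)] J(2) by blast
    have "p \<notin> X closure_of (coz_union X I)" using closure_disj[OF I J(1) J(3)] p by blast
    moreover have "p \<in> topspace X" using p coz_union_sub[of X J] by blast
    ultimately have "p \<in> W" by (simp add: W_def)
    moreover have "q = p" if qW: "q \<in> W" for q
    proof (rule ccontr)
      assume qp: "q \<noteq> p"
      have qT: "q \<in> topspace X" using qW openin_subset[OF Wo] by blast
      have "closedin X {q}" using t1 qT unfolding t1_space_closedin_singleton by blast
      then have o1: "openin X (W - {q})" using Wo by (simp add: openin_diff)
      have s1: "W - {q} \<subseteq> topspace X - X closure_of (coz_union X I)" by (simp add: W_def)
      have s2: "W \<subseteq> topspace X - X closure_of (coz_union X I)" by (simp add: W_def)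
      have pW: "p \<in> W - {q}" using \<open>p \<in> W\<close> qp by simp
      have a1: "AG_adj X I (JS X (W - {q}))"
        by (rule adj_JS[OF cr assms(3) o1 s1 pW])
      have a2: "AG_adj X I (JS X W)"
        by (rule adj_JS[OF cr assms(3) Wo s2 qW])
      obtain g where g: "g \<in> CX X" "g q = 1" "coz X g \<subseteq> W" using urysohn_fun[OF cr Wo qW] by blast
      have "g \<in> JS X W" using g by (simp add: JS_def)
      moreover have "g \<notin> JS X (W - {q})"
      proof
        assume "g \<in> JS X (W - {q})"
        then have "coz X g \<subseteq> W - {q}" by (simp add: JS_def)
        moreover have "q \<in> coz X g" using g(2) qT by (simp add: coz_def)
        ultimately show False by blast
      qed
      ultimately have ne: "JS X (W - {q}) \<noteq> JS X W" by blast
      have "\<exists>!J. AG_adj X I J" using leaf by (simp add: leaf_vertex_def)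
      then have "JS X (W - {q}) = JS X W" using a1 a2 by blast
      then show False using ne by contradiction
    qed
    ultimately have "W = {p}" by blast
    then have "topspace X - X closure_of (coz_union X I) = {p}" by (simp only: W_def)
    then show "\<exists>p. topspace X - X closure_of (coz_union X I) = {p}" by (rule exI)
  next
    assume "\<exists>p. topspace X - X closure_of (coz_union X I) = {p}"
    then obtain p where Wp: "W = {p}" unfolding W_def by blast
    have op: "openin X {p}" using Wo Wp by simp
    have sp: "{p} \<subseteq> topspace X - X closure_of (coz_union X I)" using Wp W_def by simp
    have a: "AG_adj X I (JS X {p})"
      by (rule adj_JS[OF cr assms(3) op sp]) simp
    have u: "J = JS X {p}" if adj: "AG_adj X I J" for J
    proof -
      have J: "is_ideal X J" "J \<noteq> zero_ideal" "ideal_prod X I J = zero_ideal"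
        using adj by (auto simp: AG_adj_def annih_ideals_def)
      have dis: "coz_union X J \<inter> X closure_of (coz_union X I) = {}"
        using closure_disj[OF I J(1) J(3)] .
      have sub: "J \<subseteq> JS X {p}"
      proof
        fix g assume g: "g \<in> J"
        then have "g \<in> CX X" using J(1) by (auto simp: is_ideal_def)
        moreover have "coz X g \<subseteq> {p}"
        proof
          fix x assume x: "x \<in> coz X g"
          then have "x \<in> coz_union X J" using g by (auto simp: coz_union_def)
          then have "x \<notin> X closure_of (coz_union X I)" using dis by blast
          moreover have "x \<in> topspace X" using x by (simp add: coz_def)
          ultimately have "x \<in> W" by (simp add: W_def)
          then show "x \<in> {p}" using Wp by simp
        qed
        ultimately show "g \<in> JS X {p}" by (simp add: JS_def)
      qed
      obtain x where x: "x \<in> coz_union X J" using nonzero_iff[OF J(1)] J(2) by blast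
      then obtain f where f: "f \<in> J" "x \<in> coz X f" by (auto simp: coz_union_def)
      have "coz X f \<subseteq> {p}" using sub f(1) by (simp add: JS_def subset_iff)
      then have "x = p" using f(2) by blast
      then have fp: "f p \<noteq> 0" using f by (simp add: coz_def)
      have "JS X {p} \<subseteq> J"
      proof
        fix g assume g: "g \<in> JS X {p}"
        then have gC: "g \<in> CX X" and gc: "coz X g \<subseteq> {p}" by (auto simp: JS_def)
        define h where "h x = g x / f p" for x
        have "continuous_map X euclideanreal (\<lambda>x. g x * inverse (f p))"
          by (rule continuous_map_real_mult_right[OF CX_cont[OF gC]])
        moreover have "h = (\<lambda>x. g x * inverse (f p))" by (simp add: h_def divide_inverse fun_eq_iff)
        ultimately have "continuous_map X euclideanreal h" by simp
        moreover have "\<forall>x. x \<notin> topspace X \<longrightarrow> h x = 0" using CX_zero_out[OF gC] by (simp add: h_def)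
        ultimately have "h \<in> CX X" by (simp add: CX_def)
        then have "(\<lambda>x. h x * f x) \<in> J" using J(1) f(1) by (simp add: is_ideal_def)
        moreover have "(\<lambda>x. h x * f x) = g"
        proof
          fix y
          show "h y * f y = g y"
          proof (cases "y = p")
            case True then show ?thesis using fp by (simp add: h_def)
          next
            case False
            have "g y = 0" using gc False CX_zero_out[OF gC, of y] by (auto simp: coz_def)
            then show ?thesis by (simp add: h_def)
          qed
        qed
        ultimately show "g \<in> J" by simp
      qed
      then show ?thesis using sub by blast
    qed
    show "leaf_vertex X I" unfolding leaf_vertex_def using assms(3) a u by blast
  qed
qed

end
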